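(* Let $U$ be a finite set of men and $W_1\subseteq W_2$ finite sets of women with $|W_1|\le|W_2|=|U|$, each man having a strict total order over $W_2$ and each woman a strict total order over $U$. Let $M_1'$ be a stable matching of $(U,W_1)$ and $M_2$ a stable matching of $(U,W_2)$. Define $M_2'$ as the union of: the pairs of $M_1'\cap M_2$; for each path component of $G(M_1',M_2)$, its edges belonging to $M_2$; for each cycle of $G(M_1',M_2)$ of Type I, its edges belonging to $M_2$; for each cycle of $G(M_1',M_2)$ of Type II, its edges belonging to $M_1'$. Then $M_2'$ is a perfect matching between $U$ and $W_2$ and it is stable for the instance $(U,W_2)$.
   Context: A matching is a set of man–woman pairs with each person in at most one pair; a blocking pair of $M$ is a pair $(u,w)\notin M$ with ($u$ unmatched or preferring $w$ to his partner) and ($w$ unmatched or preferring $u$ to her partner); a matching is stable if it has no blocking pair. Preferences in a sub-instance are restrictions of the given ones. The difference graph $G(M,M')$ has vertex set $U\cup W_2$ and edge set $M\triangle M'$. A cycle $C$ of $G(M_1',M_2)$ is of Type I if every man in $C$ strictly prefers his partner in $M_2$ to his partner in $M_1'$ and every woman in $C$ strictly prefers her partner in $M_1'$ to her partner in $M_2$; it is of Type II if every man in $C$ strictly prefers his partner in $M_1'$ to his partner in $M_2$ and every woman in $C$ strictly prefers her partner in $M_2$ to her partner in $M_1'$ (every cycle is of one of these types). *)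

theory Defs
  imports Main
begin

(* Preferences:  (w, w') \<in> PM u  means man u strictly prefers
   woman w to woman w';  (u, u') \<in> PW w  means woman w strictly prefers u to u'. *)

definition is_matching :: "'m set \<Rightarrow> 'w set \<Rightarrow> ('m \<times> 'w) set \<Rightarrow> bool" where
  "is_matching U W M \<longleftrightarrow> M \<subseteq> U \<times> W \<and>
     (\<forall>u w w'. (u, w) \<in> M \<longrightarrow> (u, w') \<in> M \<longrightarrow> w = w') \<and>
     (\<forall>u u' w. (u, w) \<in> M \<longrightarrow> (u', w) \<in> M \<longrightarrow> u = u')"

definition blocking_pair ::
  "('m \<Rightarrow> ('w \<times> 'w) set) \<Rightarrow> ('w \<Rightarrow> ('m \<times> 'm) set) \<Rightarrow> ('m \<times> 'w) set \<Rightarrow> 'm \<Rightarrow> 'w \<Rightarrow> bool" where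
  "blocking_pair PM PW M u w \<longleftrightarrow> (u, w) \<notin> M \<and>
     ((\<nexists>w'. (u, w') \<in> M) \<or> (\<exists>w'. (u, w') \<in> M \<and> (w, w') \<in> PM u)) \<and>
     ((\<nexists>u'. (u', w) \<in> M) \<or> (\<exists>u'. (u', w) \<in> M \<and> (u, u') \<in> PW w))"

(* stable matching of the sub-instance (U, W); preferences are the given ones
   restricted to U and W (only pairs in U \<times> W are considered) *)
definition stable_matching ::
  "('m \<Rightarrow> ('w \<times> 'w) set) \<Rightarrow> ('w \<Rightarrow> ('m \<times> 'm) set) \<Rightarrow> 'm set \<Rightarrow> 'w set \<Rightarrow> ('m \<times> 'w) set \<Rightarrow> bool" where
  "stable_matching PM PW U W M \<longleftrightarrow> is_matching U W M \<and>
     (\<forall>u\<in>U. \<forall>w\<in>W. \<not> blocking_pair PM PW M u w)"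

definition perfect_matching :: "'m set \<Rightarrow> 'w set \<Rightarrow> ('m \<times> 'w) set \<Rightarrow> bool" where
  "perfect_matching U W M \<longleftrightarrow> is_matching U W M \<and>
     (\<forall>u\<in>U. \<exists>w. (u, w) \<in> M) \<and> (\<forall>w\<in>W. \<exists>u. (u, w) \<in> M)"

definition diff_edges :: "('m \<times> 'w) set \<Rightarrow> ('m \<times> 'w) set \<Rightarrow> ('m \<times> 'w) set" where
  "diff_edges M M' = (M - M') \<union> (M' - M)"

definition edge_adj :: "('m \<times> 'w) set \<Rightarrow> (('m \<times> 'w) \<times> ('m \<times> 'w)) set" where
  "edge_adj D = {(a, b). a \<in> D \<and> b \<in> D \<and> (fst a = fst b \<or> snd a = snd b)}"

definition component :: "('m \<times> 'w) set \<Rightarrow> 'm \<times> 'w \<Rightarrow> ('m \<times> 'w) set" where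
  "component D e = {e' \<in> D. (e, e') \<in> (edge_adj D)\<^sup>*}"

(* A component (given by its edge set C) is a cycle iff every vertex of it has degree 2
   in the graph with edge set D; otherwise (all degrees being \<le> 2 in a difference
   graph of two matchings) it is a path. *)
definition is_cycle_comp :: "('m \<times> 'w) set \<Rightarrow> ('m \<times> 'w) set \<Rightarrow> bool" where
  "is_cycle_comp D C \<longleftrightarrow> (\<forall>u \<in> fst ` C. card {w. (u, w) \<in> D} = 2) \<and>
                          (\<forall>w \<in> snd ` C. card {u. (u, w) \<in> D} = 2)"

definition typeI ::
  "('m \<Rightarrow> ('w \<times> 'w) set) \<Rightarrow> ('w \<Rightarrow> ('m \<times> 'm) set) \<Rightarrow> ('m \<times> 'w) set \<Rightarrow> ('m \<times> 'w) set
     \<Rightarrow> ('m \<times> 'w) set \<Rightarrow> bool" where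
  "typeI PM PW M1 M2 C \<longleftrightarrow>
     (\<forall>u \<in> fst ` C. \<forall>w1 w2. (u, w1) \<in> M1 \<longrightarrow> (u, w2) \<in> M2 \<longrightarrow> (w2, w1) \<in> PM u) \<and>
     (\<forall>w \<in> snd ` C. \<forall>u1 u2. (u1, w) \<in> M1 \<longrightarrow> (u2, w) \<in> M2 \<longrightarrow> (u1, u2) \<in> PW w)"

definition typeII ::
  "('m \<Rightarrow> ('w \<times> 'w) set) \<Rightarrow> ('w \<Rightarrow> ('m \<times> 'm) set) \<Rightarrow> ('m \<times> 'w) set \<Rightarrow> ('m \<times> 'w) set
     \<Rightarrow> ('m \<times> 'w) set \<Rightarrow> bool" where
  "typeII PM PW M1 M2 C \<longleftrightarrow>
     (\<forall>u \<in> fst ` C. \<forall>w1 w2. (u, w1) \<in> M1 \<longrightarrow> (u, w2) \<in> M2 \<longrightarrow> (w1, w2) \<in> PM u) \<and>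
     (\<forall>w \<in> snd ` C. \<forall>u1 u2. (u1, w) \<in> M1 \<longrightarrow> (u2, w) \<in> M2 \<longrightarrow> (u2, u1) \<in> PW w)"

(* M2' built from M1' (= M1) and M2 *)
definition combine ::
  "('m \<Rightarrow> ('w \<times> 'w) set) \<Rightarrow> ('w \<Rightarrow> ('m \<times> 'm) set) \<Rightarrow> ('m \<times> 'w) set \<Rightarrow> ('m \<times> 'w) set
     \<Rightarrow> ('m \<times> 'w) set" where
  "combine PM PW M1 M2 =
     (let D = diff_edges M1 M2 in
       (M1 \<inter> M2)
       \<union> {e \<in> M2 - M1. \<not> is_cycle_comp D (component D e)}
       \<union> {e \<in> M2 - M1. is_cycle_comp D (component D e) \<and> typeI PM PW M1 M2 (component D e)}
       \<union> {e \<in> M1 - M2. is_cycle_comp D (component D e) \<and> typeII PM PW M1 M2 (component D e)})"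

end

theory Submission
  imports Defs
begin

locale L =
  fixes U :: "'m set" and W1 W2 :: "'w set"
    and PM :: "'m \<Rightarrow> ('w \<times> 'w) set" and PW :: "'w \<Rightarrow> ('m \<times> 'm) set"
    and M1 M2 :: "('m \<times> 'w) set"
  assumes fU: "finite U" and fW: "finite W2" and W12: "W1 \<subseteq> W2"
    and cardeq: "card W2 = card U"
    and pmo: "\<And>u. u \<in> U \<Longrightarrow> strict_linear_order_on W2 (PM u) \<and> PM u \<subseteq> W2 \<times> W2"
    and pwo: "\<And>w. w \<in> W2 \<Longrightarrow> strict_linear_order_on U (PW w) \<and> PW w \<subseteq> U \<times> U"
    and st1: "stable_matching PM PW U W1 M1"
    and st2: "stable_matching PM PW U W2 M2"
begin

lemma pm_irr: "u \<in> U \<Longrightarrow> (a, a) \<notin> PM u"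
  using pmo[of u] unfolding strict_linear_order_on_def irrefl_def by blast
lemma pm_trans: "u \<in> U \<Longrightarrow> (a, b) \<in> PM u \<Longrightarrow> (b, c) \<in> PM u \<Longrightarrow> (a, c) \<in> PM u"
  using pmo[of u] unfolding strict_linear_order_on_def trans_def by blast
lemma pm_asym: "u \<in> U \<Longrightarrow> (a, b) \<in> PM u \<Longrightarrow> (b, a) \<in> PM u \<Longrightarrow> False"
  using pm_irr pm_trans by blast
lemma pm_tot: "u \<in> U \<Longrightarrow> a \<in> W2 \<Longrightarrow> b \<in> W2 \<Longrightarrow> a \<noteq> b \<Longrightarrow> (a, b) \<in> PM u \<or> (b, a) \<in> PM u"
  using pmo[of u] unfolding strict_linear_order_on_def total_on_def by blast
lemma pw_irr: "w \<in> W2 \<Longrightarrow> (a, a) \<notin> PW w"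
  using pwo[of w] unfolding strict_linear_order_on_def irrefl_def by blast
lemma pw_trans: "w \<in> W2 \<Longrightarrow> (a, b) \<in> PW w \<Longrightarrow> (b, c) \<in> PW w \<Longrightarrow> (a, c) \<in> PW w"
  using pwo[of w] unfolding strict_linear_order_on_def trans_def by blast
lemma pw_tot: "w \<in> W2 \<Longrightarrow> a \<in> U \<Longrightarrow> b \<in> U \<Longrightarrow> a \<noteq> b \<Longrightarrow> (a, b) \<in> PW w \<or> (b, a) \<in> PW w"
  using pwo[of w] unfolding strict_linear_order_on_def total_on_def by blast

lemma M1_sub: "(u, w) \<in> M1 \<Longrightarrow> u \<in> U \<and> w \<in> W1"
  using st1 unfolding stable_matching_def is_matching_def by blast
lemma M2_sub: "(u, w) \<in> M2 \<Longrightarrow> u \<in> U \<and> w \<in> W2"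
  using st2 unfolding stable_matching_def is_matching_def by blast
lemma M1_u: "(u, w) \<in> M1 \<Longrightarrow> (u, w') \<in> M1 \<Longrightarrow> w = w'"
  using st1 unfolding stable_matching_def is_matching_def by blast
lemma M1_w: "(u, w) \<in> M1 \<Longrightarrow> (u', w) \<in> M1 \<Longrightarrow> u = u'"
  using st1 unfolding stable_matching_def is_matching_def by blast
lemma M2_u: "(u, w) \<in> M2 \<Longrightarrow> (u, w') \<in> M2 \<Longrightarrow> w = w'"
  using st2 unfolding stable_matching_def is_matching_def by blast
lemma M2_w: "(u, w) \<in> M2 \<Longrightarrow> (u', w) \<in> M2 \<Longrightarrow> u = u'"
  using st2 unfolding stable_matching_def is_matching_def by blast

lemma nb1: "u \<in> U \<Longrightarrow> w \<in> W1 \<Longrightarrow> \<not> blocking_pair PM PW M1 u w"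
  using st1 unfolding stable_matching_def by blast
lemma nb2: "u \<in> U \<Longrightarrow> w \<in> W2 \<Longrightarrow> \<not> blocking_pair PM PW M2 u w"
  using st2 unfolding stable_matching_def by blast

lemma M2_cards: "card (fst ` M2) = card (snd ` M2)"
proof -
  have "inj_on fst M2" by (auto simp: inj_on_def intro: M2_w M2_u)
  moreover have "inj_on snd M2" by (auto simp: inj_on_def intro: M2_w M2_u)
  ultimately show ?thesis by (simp add: card_image)
qed

lemma M2_perfect: "perfect_matching U W2 M2"
proof -
  have A: "fst ` M2 \<subseteq> U" and B: "snd ` M2 \<subseteq> W2" using M2_sub by force+
  have men: "\<exists>w. (u, w) \<in> M2" if u: "u \<in> U" for u
  proof (rule ccontr)
    assume nu: "\<not> (\<exists>w. (u, w) \<in> M2)"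
    have "u \<notin> fst ` M2" using nu by force
    hence "fst ` M2 \<subset> U" using A u by blast
    hence "card (fst ` M2) < card U" using fU by (simp add: psubset_card_mono)
    hence "card (snd ` M2) < card W2" using M2_cards cardeq by simp
    hence "snd ` M2 \<noteq> W2" by auto
    then obtain w where w: "w \<in> W2" "w \<notin> snd ` M2" using B by blast
    have "blocking_pair PM PW M2 u w" unfolding blocking_pair_def using nu w by force
    thus False using nb2 u w by blast
  qed
  have women: "\<exists>u. (u, w) \<in> M2" if w: "w \<in> W2" for w
  proof (rule ccontr)
    assume nw: "\<not> (\<exists>u. (u, w) \<in> M2)"
    have "w \<notin> snd ` M2" using nw by force
    hence "snd ` M2 \<subset> W2" using B w by blast
    hence "card (snd ` M2) < card W2" using fW by (simp add: psubset_card_mono)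
    hence "card (fst ` M2) < card U" using M2_cards cardeq by simp
    hence "fst ` M2 \<noteq> U" by auto
    then obtain u where u: "u \<in> U" "u \<notin> fst ` M2" using A by blast
    have "blocking_pair PM PW M2 u w" unfolding blocking_pair_def using nw u by force
    thus False using nb2 u w by blast
  qed
  show ?thesis unfolding perfect_matching_def using st2 men women
    unfolding stable_matching_def by blast
qed

lemma m2u: "u \<in> U \<Longrightarrow> \<exists>w. (u, w) \<in> M2"
  using M2_perfect unfolding perfect_matching_def by blast
lemma m2w: "w \<in> W2 \<Longrightarrow> \<exists>u. (u, w) \<in> M2"
  using M2_perfect unfolding perfect_matching_def by blast

definition "T = {u\<in>U. \<exists>w1 w2. (u, w1) \<in> M1 \<and> (u, w2) \<in> M2 \<and> (w1, w2) \<in> PM u}"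
definition "dm = {u. \<exists>w v. (u, w) \<in> M2 \<and> (v, w) \<in> M1}"
definition "g u = (SOME v. \<exists>w. (u, w) \<in> M2 \<and> (v, w) \<in> M1)"

lemma g_spec: "u \<in> dm \<Longrightarrow> \<exists>w. (u, w) \<in> M2 \<and> (g u, w) \<in> M1"
  unfolding dm_def g_def by (rule someI_ex) blast

lemma g_eq: "(u, w) \<in> M2 \<Longrightarrow> (v, w) \<in> M1 \<Longrightarrow> g u = v"
proof -
  assume a: "(u, w) \<in> M2" "(v, w) \<in> M1"
  hence "u \<in> dm" unfolding dm_def by blast
  then obtain w' where w': "(u, w') \<in> M2" "(g u, w') \<in> M1" using g_spec by blast
  have "w' = w" using M2_u[OF w'(1) a(1)] .
  thus ?thesis using M1_w[OF w'(2)] a(2) by simp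
qed

lemma g_inj: "inj_on g dm"
proof (rule inj_onI)
  fix x y assume "x \<in> dm" "y \<in> dm" "g x = g y"
  obtain w where w: "(x, w) \<in> M2" "(g x, w) \<in> M1" using g_spec \<open>x \<in> dm\<close> by blast
  obtain w' where w': "(y, w') \<in> M2" "(g y, w') \<in> M1" using g_spec \<open>y \<in> dm\<close> by blast
  have "w = w'" using M1_u[OF w(2)] w'(2) \<open>g x = g y\<close> by simp
  thus "x = y" using M2_w[OF w(1)] w'(1) by simp
qed

lemma T_U: "T \<subseteq> U" unfolding T_def by blast

lemma T_neq: "u \<in> T \<Longrightarrow> (u, w) \<in> M1 \<Longrightarrow> (u, w) \<in> M2 \<Longrightarrow> False"
proof -
  assume a: "u \<in> T" "(u, w) \<in> M1" "(u, w) \<in> M2"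
  then obtain w1 w2 where w: "(u, w1) \<in> M1" "(u, w2) \<in> M2" "(w1, w2) \<in> PM u" "u \<in> U"
    unfolding T_def by blast
  have "w1 = w" using M1_u[OF w(1) a(2)] .
  moreover have "w2 = w" using M2_u[OF w(2) a(3)] .
  ultimately show False using w(3) pm_irr[OF w(4)] by simp
qed

lemma woman_II:
  assumes "u1 \<in> T" "(u1, w) \<in> M1" "(u2, w) \<in> M2"
  shows "(u2, u1) \<in> PW w \<and> u1 \<noteq> u2"
proof -
  obtain w1 w2 where w: "(u1, w1) \<in> M1" "(u1, w2) \<in> M2" "(w1, w2) \<in> PM u1" "u1 \<in> U"
    using assms(1) unfolding T_def by blast
  have "w1 = w" using w(1) assms(2) M1_u by blast
  have "w2 \<noteq> w" using w \<open>w1 = w\<close> pm_irr by blast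
  have ne: "u1 \<noteq> u2" using assms(3) w(2) \<open>w2 \<noteq> w\<close> M2_u by blast
  have wW: "w \<in> W2" and u2U: "u2 \<in> U" using M2_sub assms(3) by blast+
  show ?thesis
  proof (rule ccontr)
    assume "\<not> ?thesis"
    hence "(u1, u2) \<in> PW w" using pw_tot[OF wW w(4) u2U] ne by blast
    moreover have "(u1, w) \<notin> M2" using w(2) \<open>w2 \<noteq> w\<close> M2_u by blast
    ultimately have "blocking_pair PM PW M2 u1 w"
      unfolding blocking_pair_def using w \<open>w1 = w\<close> assms(3) by blast
    thus False using nb2 w(4) wW by blast
  qed
qed

lemma back_prop:
  assumes "v \<in> T" "(v, w) \<in> M1" "(u, w) \<in> M2"
  shows "u \<in> T"
proof -
  have p: "(u, v) \<in> PW w" "v \<noteq> u" using woman_II assms by blast+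
  have uU: "u \<in> U" and wW1: "w \<in> W1" using M2_sub assms M1_sub by blast+
  have nM1: "(u, w) \<notin> M1" using assms(2) M1_w p(2) by blast
  show ?thesis
  proof (cases "\<exists>w1. (u, w1) \<in> M1")
    case False
    hence "blocking_pair PM PW M1 u w" unfolding blocking_pair_def using nM1 assms(2) p by blast
    thus ?thesis using nb1 uU wW1 by blast
  next
    case True
    then obtain w1 where w1: "(u, w1) \<in> M1" by blast
    have "w1 \<noteq> w" using w1 nM1 by blast
    show ?thesis
    proof (cases "(w1, w) \<in> PM u")
      case True thus ?thesis unfolding T_def using uU w1 assms(3) by blast
    next
      case False
      have "w1 \<in> W2" "w \<in> W2" using M1_sub w1 wW1 W12 by blast+
      hence "(w, w1) \<in> PM u" using pm_tot[OF uU] False \<open>w1 \<noteq> w\<close> by blast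
      hence "blocking_pair PM PW M1 u w" unfolding blocking_pair_def using nM1 assms(2) p w1 by blast
      thus ?thesis using nb1 uU wW1 by blast
    qed
  qed
qed

lemma man_I:
  assumes "u \<in> U" "u \<notin> T" "(u, w1) \<in> M1" "(u, w2) \<in> M2" "w1 \<noteq> w2"
  shows "(w2, w1) \<in> PM u"
proof -
  have "(w1, w2) \<notin> PM u" using assms unfolding T_def by blast
  moreover have "w1 \<in> W2" "w2 \<in> W2" using M1_sub M2_sub assms W12 by blast+
  ultimately show ?thesis using pm_tot[OF assms(1)] assms(5) by blast
qed

lemma woman_I:
  assumes "u2 \<notin> T" "(u1, w) \<in> M1" "(u2, w) \<in> M2" "u1 \<noteq> u2"
  shows "(u1, u2) \<in> PW w"
proof (rule ccontr)
  assume na: "(u1, u2) \<notin> PW w"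
  have wW1: "w \<in> W1" and u1U: "u1 \<in> U" using M1_sub assms by blast+
  have u2U: "u2 \<in> U" and wW: "w \<in> W2" using M2_sub assms by blast+
  have p: "(u2, u1) \<in> PW w" using pw_tot[OF wW u1U u2U] na assms(4) by blast
  have nM1: "(u2, w) \<notin> M1" using assms M1_w by blast
  have "(\<nexists>w'. (u2, w') \<in> M1) \<or> (\<exists>w'. (u2, w') \<in> M1 \<and> (w, w') \<in> PM u2)"
  proof (cases "\<exists>w'. (u2, w') \<in> M1")
    case True
    then obtain w' where w': "(u2, w') \<in> M1" by blast
    have "w' \<noteq> w" using w' nM1 by blast
    hence "(w, w') \<in> PM u2" using man_I[OF u2U assms(1) w' assms(3)] by blast
    thus ?thesis using w' by blast
  qed blast
  hence "blocking_pair PM PW M1 u2 w" unfolding blocking_pair_def using nM1 assms(2) p by blast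
  thus False using nb1 u2U wW1 by blast
qed

lemma T_dm: "T \<subseteq> dm \<and> g ` T = T"
proof -
  have fT: "finite T" using T_U fU finite_subset by blast
  have sub: "T \<subseteq> g ` (T \<inter> dm)"
  proof
    fix v assume v: "v \<in> T"
    then obtain w where w: "(v, w) \<in> M1" unfolding T_def by blast
    have "w \<in> W2" using M1_sub w W12 by blast
    then obtain u where u: "(u, w) \<in> M2" using m2w by blast
    have "u \<in> T" using back_prop v w u by blast
    moreover have "u \<in> dm" using u w unfolding dm_def by blast
    moreover have "g u = v" using g_eq u w by blast
    ultimately show "v \<in> g ` (T \<inter> dm)" by blast
  qed
  have "card T \<le> card (g ` (T \<inter> dm))" using card_mono[OF _ sub] fT by blast
  also have "\<dots> \<le> card (T \<inter> dm)" using card_image_le fT by blast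
  finally have c1: "card T \<le> card (T \<inter> dm)" .
  have "T \<inter> dm = T" using card_seteq[OF fT _ c1] by blast
  hence s2: "T \<subseteq> g ` T" using sub by simp
  have "card (g ` T) \<le> card T" using card_image_le fT by blast
  hence "g ` T = T" using card_seteq[OF _ s2] fT by blast
  thus ?thesis using \<open>T \<inter> dm = T\<close> by blast
qed

abbreviation "D \<equiv> diff_edges M1 M2"

lemma D_cases: "(u, w) \<in> D \<Longrightarrow> ((u, w) \<in> M1 \<and> (u, w) \<notin> M2) \<or> ((u, w) \<in> M2 \<and> (u, w) \<notin> M1)"
  unfolding diff_edges_def by blast

lemma adj_D: "(e, e') \<in> edge_adj D \<Longrightarrow> e \<in> D \<and> e' \<in> D"
  unfolding edge_adj_def by blast

lemma closure1:
  assumes "(e, e') \<in> edge_adj D" "fst e \<in> T"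
  shows "fst e' \<in> T"
proof -
  obtain u w u' w' where e: "e = (u, w)" "e' = (u', w')" by (cases e, cases e') auto
  have D: "(u, w) \<in> D" "(u', w') \<in> D" using adj_D assms(1) e by blast+
  have orr: "u = u' \<or> w = w'" using assms(1) e unfolding edge_adj_def by auto
  show ?thesis
  proof (cases "u = u'")
    case True thus ?thesis using assms e by simp
  next
    case False
    hence ww: "w' = w" using orr by blast
    show ?thesis
    proof (cases "(u, w) \<in> M2")
      case True
      hence "(u', w) \<in> M1" using D(2) ww D_cases M2_w False by blast
      hence "g u = u'" using g_eq True by blast
      moreover have "u \<in> T" using assms e by simp
      ultimately show ?thesis using T_dm e by force
    next
      case False
      hence m1: "(u, w) \<in> M1" using D(1) D_cases by blast
      hence "(u', w) \<in> M2" using D(2) ww D_cases M1_w \<open>u \<noteq> u'\<close> by blast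
      thus ?thesis using back_prop m1 assms e by auto
    qed
  qed
qed

lemma closure_rt:
  assumes "(e, e') \<in> (edge_adj D)\<^sup>*" "fst e \<in> T"
  shows "fst e' \<in> T"
  using assms(1)
proof (induction rule: rtrancl_induct)
  case base show ?case using assms(2) .
next
  case (step y z) show ?case by (rule closure1[OF step(2) step(3)])
qed

lemma adj_sym: "(e, e') \<in> edge_adj D \<Longrightarrow> (e', e) \<in> edge_adj D"
  unfolding edge_adj_def by auto

lemma rt_sym:
  assumes "(e, e') \<in> (edge_adj D)\<^sup>*"
  shows "(e', e) \<in> (edge_adj D)\<^sup>*"
  using assms
proof (induction rule: rtrancl_induct)
  case base thus ?case by simp
next
  case (step y z)
  show ?case by (rule converse_rtrancl_into_rtrancl[OF adj_sym[OF step(2)] step(3)])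
qed

lemma comp_T:
  assumes "e' \<in> component D e" "e'' \<in> component D e" "fst e' \<in> T"
  shows "fst e'' \<in> T"
proof -
  have a1: "(e, e') \<in> (edge_adj D)\<^sup>*" and a2: "(e, e'') \<in> (edge_adj D)\<^sup>*"
    using assms unfolding component_def by blast+
  have "(e', e'') \<in> (edge_adj D)\<^sup>*" by (rule rtrancl_trans[OF rt_sym[OF a1] a2])
  thus ?thesis using closure_rt assms(3) by blast
qed

lemma comp_nb:
  assumes "e' \<in> component D e" "(a, b) \<in> D" "fst e' = a \<or> snd e' = b"
  shows "(a, b) \<in> component D e"
proof -
  have h0: "e' \<in> D" and h1: "(e, e') \<in> (edge_adj D)\<^sup>*" using assms unfolding component_def by blast+
  have h2: "(e', (a, b)) \<in> edge_adj D" unfolding edge_adj_def using assms h0 by auto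
  have "(e, (a, b)) \<in> (edge_adj D)\<^sup>*" by (rule rtrancl_into_rtrancl[OF h1 h2])
  thus ?thesis unfolding component_def using assms(2) by blast
qed

lemma comp_D: "e' \<in> component D e \<Longrightarrow> e' \<in> D"
  unfolding component_def by blast

lemma vert_man:
  assumes "u \<in> fst ` component D e" "(u, w1) \<in> M1" "(u, w2) \<in> M2"
  shows "w1 \<noteq> w2"
proof
  assume eq: "w1 = w2"
  obtain x where "(u, x) \<in> component D e" using assms(1) by force
  hence "(u, x) \<in> D" using comp_D by blast
  hence "((u, x) \<in> M1 \<and> (u, x) \<notin> M2) \<or> ((u, x) \<in> M2 \<and> (u, x) \<notin> M1)" by (rule D_cases)
  thus False
  proof
    assume h: "(u, x) \<in> M1 \<and> (u, x) \<notin> M2"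
    hence "x = w1" using M1_u assms(2) by blast
    thus False using h assms(3) eq by simp
  next
    assume h: "(u, x) \<in> M2 \<and> (u, x) \<notin> M1"
    hence "x = w2" using M2_u assms(3) by blast
    thus False using h assms(2) eq by simp
  qed
qed

lemma vert_woman:
  assumes "w \<in> snd ` component D e" "(u1, w) \<in> M1" "(u2, w) \<in> M2"
  shows "u1 \<noteq> u2"
proof
  assume eq: "u1 = u2"
  obtain x where "(x, w) \<in> component D e" using assms(1) by force
  hence "(x, w) \<in> D" using comp_D by blast
  hence "((x, w) \<in> M1 \<and> (x, w) \<notin> M2) \<or> ((x, w) \<in> M2 \<and> (x, w) \<notin> M1)" by (rule D_cases)
  thus False
  proof
    assume h: "(x, w) \<in> M1 \<and> (x, w) \<notin> M2"
    hence "x = u1" using M1_w assms(2) by blast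
    thus False using h assms(3) eq by simp
  next
    assume h: "(x, w) \<in> M2 \<and> (x, w) \<notin> M1"
    hence "x = u2" using M2_w assms(3) by blast
    thus False using h assms(2) eq by simp
  qed
qed


lemma typeI_nT:
  assumes "\<forall>e'\<in>component D e. fst e' \<notin> T"
  shows "typeI PM PW M1 M2 (component D e)"
  unfolding typeI_def
proof (intro conjI ballI allI impI)
  fix u w1 w2 assume u: "u \<in> fst ` component D e" "(u, w1) \<in> M1" "(u, w2) \<in> M2"
  have nT: "u \<notin> T" using u(1) assms by force
  have ne: "w1 \<noteq> w2" by (rule vert_man[OF u])
  have uU: "u \<in> U" using M1_sub u(2) by blast
  show "(w2, w1) \<in> PM u" by (rule man_I[OF uU nT u(2) u(3) ne])
next
  fix w u1 u2 assume w: "w \<in> snd ` component D e" "(u1, w) \<in> M1" "(u2, w) \<in> M2"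
  have ne: "u1 \<noteq> u2" by (rule vert_woman[OF w])
  obtain x where x: "(x, w) \<in> component D e" using w(1) by force
  have "(u2, w) \<notin> M1" using M1_w w(2) ne by blast
  hence "(u2, w) \<in> D" using w(3) unfolding diff_edges_def by blast
  hence "(u2, w) \<in> component D e" using comp_nb[OF x] by simp
  hence nT: "u2 \<notin> T" using assms by force
  show "(u1, u2) \<in> PW w" by (rule woman_I[OF nT w(2) w(3) ne])
qed

lemma T_all:
  assumes "\<forall>e'\<in>component D e. fst e' \<in> T"
  shows "typeII PM PW M1 M2 (component D e) \<and> is_cycle_comp D (component D e)"
proof -
  have t2: "typeII PM PW M1 M2 (component D e)"
    unfolding typeII_def
  proof (intro conjI ballI allI impI)
    fix u w1 w2 assume u: "u \<in> fst ` component D e" "(u, w1) \<in> M1" "(u, w2) \<in> M2"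
    have "u \<in> T" using u(1) assms by force
    then obtain a b where ab: "(u, a) \<in> M1" "(u, b) \<in> M2" "(a, b) \<in> PM u"
      unfolding T_def by blast
    have "a = w1" using M1_u[OF ab(1) u(2)] .
    moreover have "b = w2" using M2_u[OF ab(2) u(3)] .
    ultimately show "(w1, w2) \<in> PM u" using ab(3) by simp
  next
    fix w u1 u2 assume w: "w \<in> snd ` component D e" "(u1, w) \<in> M1" "(u2, w) \<in> M2"
    have ne: "u1 \<noteq> u2" by (rule vert_woman[OF w])
    obtain x where x: "(x, w) \<in> component D e" using w(1) by force
    have "(u1, w) \<notin> M2" using M2_w w(3) ne by blast
    hence "(u1, w) \<in> D" using w(2) unfolding diff_edges_def by blast
    hence "(u1, w) \<in> component D e" using comp_nb[OF x] by simp
    hence "u1 \<in> T" using assms by force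
    thus "(u2, u1) \<in> PW w" using woman_II w(2) w(3) by blast
  qed
  have cyc: "is_cycle_comp D (component D e)"
    unfolding is_cycle_comp_def
  proof (intro conjI ballI)
    fix u assume u: "u \<in> fst ` component D e"
    have "u \<in> T" using u(1) assms by force
    then obtain a b where ab: "(u, a) \<in> M1" "(u, b) \<in> M2"
      unfolding T_def by blast
    have ne: "a \<noteq> b" using T_neq[OF \<open>u \<in> T\<close>] ab by blast
    have "{w. (u, w) \<in> D} = {a, b}"
    proof
      show "{w. (u, w) \<in> D} \<subseteq> {a, b}"
        using ab M1_u M2_u unfolding diff_edges_def by blast
      have "(u, a) \<notin> M2" using M2_u ab(2) ne by blast
      moreover have "(u, b) \<notin> M1" using M1_u ab(1) ne by blast
      ultimately show "{a, b} \<subseteq> {w. (u, w) \<in> D}" using ab unfolding diff_edges_def by blast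
    qed
    thus "card {w. (u, w) \<in> D} = 2" using ne by simp
  next
    fix w assume w: "w \<in> snd ` component D e"
    obtain x where x: "(x, w) \<in> component D e" using w(1) by force
    have xD: "(x, w) \<in> D" using comp_D x by blast
    have "w \<in> W2" using xD M1_sub M2_sub W12 unfolding diff_edges_def by blast
    then obtain u2 where u2: "(u2, w) \<in> M2" using m2w by blast
    have "(u2, w) \<notin> M1"
    proof
      assume h: "(u2, w) \<in> M1"
      from D_cases[OF xD] show False
      proof
        assume "(x, w) \<in> M1 \<and> (x, w) \<notin> M2"
        thus False using M1_w h u2 by blast
      next
        assume "(x, w) \<in> M2 \<and> (x, w) \<notin> M1"
        thus False using M2_w h u2 by blast
      qed
    qed
    hence "(u2, w) \<in> D" using u2 unfolding diff_edges_def by blast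
    hence "(u2, w) \<in> component D e" using comp_nb[OF x] by simp
    hence u2T: "u2 \<in> T" using assms by force
    hence "u2 \<in> dm" using T_dm by blast
    then obtain w' where w': "(u2, w') \<in> M2" "(g u2, w') \<in> M1" using g_spec by blast
    have "w' = w" using M2_u[OF w'(1) u2] .
    hence u1: "(g u2, w) \<in> M1" using w'(2) by simp
    have ne: "g u2 \<noteq> u2" using T_neq[OF u2T] u1 u2 by auto
    have "{u. (u, w) \<in> D} = {g u2, u2}"
    proof
      show "{u. (u, w) \<in> D} \<subseteq> {g u2, u2}"
        using u1 u2 M1_w M2_w unfolding diff_edges_def by blast
      have "(g u2, w) \<notin> M2" using M2_w u2 ne by blast
      moreover have "(u2, w) \<notin> M1" using M1_w u1 ne by blast
      ultimately show "{g u2, u2} \<subseteq> {u. (u, w) \<in> D}" using u1 u2 unfolding diff_edges_def by blast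
    qed
    thus "card {u. (u, w) \<in> D} = 2" using ne by simp
  qed
  show ?thesis using t2 cyc by blast
qed

definition "R = {(u, w). (u, w) \<in> M2 \<and> u \<notin> T} \<union> {(u, w). (u, w) \<in> M1 \<and> u \<in> T}"

lemma comp_self: "e \<in> D \<Longrightarrow> e \<in> component D e"
  unfolding component_def by blast

lemma comp_dich:
  assumes "(u, w) \<in> D"
  shows "(u \<in> T \<longrightarrow> (\<forall>e'\<in>component D (u, w). fst e' \<in> T)) \<and>
         (u \<notin> T \<longrightarrow> (\<forall>e'\<in>component D (u, w). fst e' \<notin> T))"
proof -
  have s: "(u, w) \<in> component D (u, w)" using comp_self assms by blast
  show ?thesis using comp_T[OF s] comp_T[OF _ s] by force
qed

lemma comb_eq: "combine PM PW M1 M2 = R"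
proof (rule set_eqI)
  fix x :: "'m \<times> 'w"
  obtain u w where x: "x = (u, w)" by (cases x) auto
  let ?C = "component D (u, w)"
  have inC: "(u, w) \<in> D \<Longrightarrow> (u, w) \<in> ?C" using comp_self by blast
  have nt1: False if hh: "u \<in> T" "(u, w) \<in> D" "typeI PM PW M1 M2 ?C"
  proof -
    obtain a b where ab: "(u, a) \<in> M1" "(u, b) \<in> M2" "(a, b) \<in> PM u" "u \<in> U"
      using hh(1) unfolding T_def by blast
    have "u \<in> fst ` ?C" using inC hh(2) by force
    hence "(b, a) \<in> PM u" using hh(3) ab unfolding typeI_def by blast
    thus False using pm_asym ab by blast
  qed
  have nt2: False if hh: "u \<notin> T" "(u, w) \<in> M1" "(u, w) \<in> D" "typeII PM PW M1 M2 ?C"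
  proof -
    have uU: "u \<in> U" using M1_sub hh(2) by blast
    then obtain b where b: "(u, b) \<in> M2" using m2u by blast
    have "u \<in> fst ` ?C" using inC hh(3) by force
    hence "(w, b) \<in> PM u" using hh(4) hh(2) b unfolding typeII_def by blast
    thus False using hh(1) uU hh(2) b unfolding T_def by blast
  qed
  show "x \<in> combine PM PW M1 M2 \<longleftrightarrow> x \<in> R"
  proof
    assume "x \<in> combine PM PW M1 M2"
    hence c: "(u, w) \<in> M1 \<inter> M2 \<or>
      ((u, w) \<in> M2 - M1 \<and> (\<not> is_cycle_comp D ?C \<or> typeI PM PW M1 M2 ?C)) \<or>
      ((u, w) \<in> M1 - M2 \<and> is_cycle_comp D ?C \<and> typeII PM PW M1 M2 ?C)"
      unfolding combine_def Let_def x by blast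
    show "x \<in> R"
    proof -
      { assume h: "(u, w) \<in> M1 \<inter> M2"
        hence "u \<notin> T" using T_neq by blast
        hence ?thesis using h x unfolding R_def by blast }
      moreover
      { assume h: "(u, w) \<in> M2 - M1" "\<not> is_cycle_comp D ?C \<or> typeI PM PW M1 M2 ?C"
        have D: "(u, w) \<in> D" using h unfolding diff_edges_def by blast
        have "u \<notin> T"
        proof
          assume uT: "u \<in> T"
          hence "is_cycle_comp D ?C" using T_all comp_dich[OF D] by blast
          hence "typeI PM PW M1 M2 ?C" using h by blast
          thus False using nt1 uT D by blast
        qed
        hence ?thesis using h x unfolding R_def by blast }
      moreover
      { assume h: "(u, w) \<in> M1 - M2" "typeII PM PW M1 M2 ?C"
        have D: "(u, w) \<in> D" using h unfolding diff_edges_def by blast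
        have "u \<in> T" using nt2 h D by blast
        hence ?thesis using h x unfolding R_def by blast }
      ultimately show ?thesis using c by blast
    qed
  next
    assume "x \<in> R"
    hence r: "((u, w) \<in> M2 \<and> u \<notin> T) \<or> ((u, w) \<in> M1 \<and> u \<in> T)" unfolding R_def x by blast
    show "x \<in> combine PM PW M1 M2"
    proof -
      { assume h: "(u, w) \<in> M2" "u \<notin> T"
        { assume "(u, w) \<in> M1"
          hence ?thesis using h x unfolding combine_def Let_def by blast }
        moreover
        { assume n1: "(u, w) \<notin> M1"
          hence D: "(u, w) \<in> D" using h unfolding diff_edges_def by blast
          have "typeI PM PW M1 M2 ?C" using typeI_nT comp_dich[OF D] h(2) by blast
          hence ?thesis using h n1 x unfolding combine_def Let_def by blast }
        ultimately have ?thesis by blast }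
      moreover
      { assume h: "(u, w) \<in> M1" "u \<in> T"
        have n2: "(u, w) \<notin> M2" using T_neq h by blast
        hence D: "(u, w) \<in> D" using h unfolding diff_edges_def by blast
        have "typeII PM PW M1 M2 ?C \<and> is_cycle_comp D ?C" using T_all comp_dich[OF D] h(2) by blast
        hence ?thesis using h n2 x unfolding combine_def Let_def by blast }
      ultimately show ?thesis using r by blast
    qed
  qed
qed

lemma R_man: "(u, r) \<in> R \<Longrightarrow> (u, w') \<in> M1 \<or> (u, w') \<in> M2 \<Longrightarrow> w' = r \<or> (r, w') \<in> PM u"
proof -
  assume r: "(u, r) \<in> R" and w': "(u, w') \<in> M1 \<or> (u, w') \<in> M2"
  show ?thesis
  proof (cases "u \<in> T")
    case True
    hence r1: "(u, r) \<in> M1" using r unfolding R_def by blast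
    obtain a b where ab: "(u, a) \<in> M1" "(u, b) \<in> M2" "(a, b) \<in> PM u"
      using True unfolding T_def by blast
    have "a = r" using M1_u[OF ab(1) r1] .
    thus ?thesis using w' ab M1_u[OF r1] M2_u[OF ab(2)] by blast
  next
    case False
    hence r2: "(u, r) \<in> M2" using r unfolding R_def by blast
    have uU: "u \<in> U" using M2_sub r2 by blast
    show ?thesis
    proof (cases "(u, w') \<in> M2")
      case True thus ?thesis using M2_u[OF r2] by blast
    next
      case n: False
      hence m1: "(u, w') \<in> M1" using w' by blast
      show ?thesis
      proof (cases "w' = r")
        case False
        thus ?thesis using man_I[OF uU \<open>u \<notin> T\<close> m1 r2] by blast
      qed simp
    qed
  qed
qed

lemma R_perfect: "perfect_matching U W2 R"
  unfolding perfect_matching_def is_matching_def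
proof (intro conjI allI impI ballI)
  show "R \<subseteq> U \<times> W2" unfolding R_def using M1_sub M2_sub W12 by blast
next
  fix u w w' assume a: "(u, w) \<in> R" "(u, w') \<in> R"
  thus "w = w'" unfolding R_def using M1_u M2_u by blast
next
  fix u u' w assume a: "(u, w) \<in> R" "(u', w) \<in> R"
  have mixed: False if h: "(u, w) \<in> M2" "u \<notin> T" "(u', w) \<in> M1" "u' \<in> T" for u u'
  proof -
    have gu: "g u = u'" using g_eq h by blast
    have "u' \<in> g ` T" using T_dm h(4) by simp
    then obtain v where v: "v \<in> T" "u' = g v" by blast
    have "v \<in> dm" "u \<in> dm" using T_dm v h unfolding dm_def by blast+
    hence "u = v" using g_inj gu v unfolding inj_on_def by metis
    thus False using v h by blast
  qed
  show "u = u'"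
    using a mixed M1_w M2_w unfolding R_def by blast
next
  fix u assume u: "u \<in> U"
  show "\<exists>w. (u, w) \<in> R"
  proof (cases "u \<in> T")
    case True thus ?thesis unfolding R_def T_def by blast
  next
    case False thus ?thesis using m2u[OF u] unfolding R_def by blast
  qed
next
  fix w assume w: "w \<in> W2"
  then obtain u where u: "(u, w) \<in> M2" using m2w by blast
  show "\<exists>u. (u, w) \<in> R"
  proof (cases "u \<in> T")
    case False thus ?thesis using u unfolding R_def by blast
  next
    case True
    hence "u \<in> dm" using T_dm by blast
    then obtain w' where w': "(u, w') \<in> M2" "(g u, w') \<in> M1" using g_spec by blast
    have "w' = w" using M2_u[OF w'(1) u] .
    moreover have "g u \<in> T" using T_dm True by blast
    ultimately show ?thesis using w'(2) unfolding R_def by blast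
  qed
qed

lemma R_stable: "stable_matching PM PW U W2 R"
  unfolding stable_matching_def
proof (intro conjI ballI)
  show "is_matching U W2 R" using R_perfect unfolding perfect_matching_def by blast
next
  fix u w assume u: "u \<in> U" and w: "w \<in> W2"
  show "\<not> blocking_pair PM PW R u w"
  proof
    assume bp: "blocking_pair PM PW R u w"
    have nR: "(u, w) \<notin> R" using bp unfolding blocking_pair_def by blast
    obtain r where r: "(u, r) \<in> R" using R_perfect u unfolding perfect_matching_def by blast
    obtain u' where u': "(u', w) \<in> R" using R_perfect w unfolding perfect_matching_def by blast
    have mu: "\<And>x. (u, x) \<in> R \<Longrightarrow> x = r" using r R_perfect unfolding perfect_matching_def is_matching_def by blast
    have mw: "\<And>x. (x, w) \<in> R \<Longrightarrow> x = u'" using u' R_perfect unfolding perfect_matching_def is_matching_def by blast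
    have pr: "(w, r) \<in> PM u" using bp mu r unfolding blocking_pair_def by blast
    have pu: "(u, u') \<in> PW w" using bp mw u' unfolding blocking_pair_def by blast
    have better: "(w, x) \<in> PM u" if "(u, x) \<in> M1 \<or> (u, x) \<in> M2" for x
    proof -
      from R_man[OF r that] show ?thesis
      proof
        assume "x = r" thus ?thesis using pr by simp
      next
        assume "(r, x) \<in> PM u" thus ?thesis using pm_trans[OF u pr] by blast
      qed
    qed
    show False
    proof (cases "u' \<in> T")
      case False
      hence u'2: "(u', w) \<in> M2" using u' unfolding R_def by blast
      have n2: "(u, w) \<notin> M2"
      proof
        assume "(u, w) \<in> M2"
        hence "u = u'" using M2_w u'2 by blast
        thus False using nR u' by simp
      qed
      obtain b where b: "(u, b) \<in> M2" using m2u u by blast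
      have "blocking_pair PM PW M2 u w" unfolding blocking_pair_def
        using n2 b better[of b] u'2 pu by blast
      thus False using nb2 u w by blast
    next
      case True
      hence u'1: "(u', w) \<in> M1" using u' unfolding R_def by blast
      have wW1: "w \<in> W1" using M1_sub u'1 by blast
      have n1: "(u, w) \<notin> M1"
      proof
        assume "(u, w) \<in> M1"
        hence "u = u'" using M1_w u'1 by blast
        thus False using nR u' by simp
      qed
      have "blocking_pair PM PW M1 u w" unfolding blocking_pair_def
        using n1 better u'1 pu by blast
      thus False using nb1 u wW1 by blast
    qed
  qed
qed

end

theorem lemma4:
  fixes U :: "'m set" and W1 W2 :: "'w set"
    and PM :: "'m \<Rightarrow> ('w \<times> 'w) set" and PW :: "'w \<Rightarrow> ('m \<times> 'm) set"
    and M1 M2 :: "('m \<times> 'w) set"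
  assumes "finite U" and "finite W2" and "W1 \<subseteq> W2"
    and "card W1 \<le> card W2" and "card W2 = card U"
    and "\<And>u. u \<in> U \<Longrightarrow> strict_linear_order_on W2 (PM u) \<and> PM u \<subseteq> W2 \<times> W2"
    and "\<And>w. w \<in> W2 \<Longrightarrow> strict_linear_order_on U (PW w) \<and> PW w \<subseteq> U \<times> U"
    and "stable_matching PM PW U W1 M1"
    and "stable_matching PM PW U W2 M2"
  shows "perfect_matching U W2 (combine PM PW M1 M2)
       \<and> stable_matching PM PW U W2 (combine PM PW M1 M2)"
proof -
  interpret L U W1 W2 PM PW M1 M2
    using assms by (unfold_locales) auto
  show ?thesis using comb_eq R_perfect R_stable by simp
qed

end
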